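(* Let $\varphi\colon\mathcal{M}\to\mathcal{X}$ be a smooth lift, $y\in\mathcal{M}$, $x=\varphi(y)$. Then $W_y=\{w\in\mathcal{E}: \exists\,\alpha>0 \text{ such that } y \text{ is 2-critical for } g=f\circ\varphi \text{ with } f(x')=\langle x',w\rangle+\tfrac{\alpha}{2}\|x'-x\|^2\}$. In particular, $W_y$ is a convex cone.
   Context: $\mathcal{E}$ is a finite-dimensional real inner product space, $\mathcal{M}$ a smooth manifold, and $\varphi\colon\mathcal{M}\to\mathcal{E}$ smooth with $\varphi(\mathcal{M})=\mathcal{X}$. For $f\colon\mathcal{E}\to\mathbb{R}$, $g=f\circ\varphi$; $y$ is 2-critical for $g$ if $(g\circ c)'(0)=0$ and $(g\circ c)''(0)\ge0$ for all smooth curves $c\colon\mathbb{R}\to\mathcal{M}$ with $c(0)=y$. $W_y$ is the set of $w\in\mathcal{E}$ for which there exists a twice differentiable $f\colon\mathcal{E}\to\mathbb{R}$ with $\nabla f(x)=w$ and $y$ 2-critical for $g=f\circ\varphi$. *)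

theory Defs
  imports "HOL-Analysis.Analysis"
begin

fun C_k_on :: "nat \<Rightarrow> 'a::euclidean_space set \<Rightarrow> ('a \<Rightarrow> 'b::real_normed_vector) \<Rightarrow> bool" where
  "C_k_on 0 U f = continuous_on U f"
| "C_k_on (Suc k) U f =
     ((\<forall>x\<in>U. f differentiable (at x)) \<and>
      (\<forall>v. C_k_on k U (\<lambda>x. frechet_derivative f (at x) v)))"

definition smooth_on :: "'a::euclidean_space set \<Rightarrow> ('a \<Rightarrow> 'b::real_normed_vector) \<Rightarrow> bool" where
  "smooth_on U f \<longleftrightarrow> (\<forall>k. C_k_on k U f)"

definition smooth_atlas :: "('m::topological_space set \<times> ('m \<Rightarrow> 'n::euclidean_space)) set \<Rightarrow> bool" where
  "smooth_atlas A \<longleftrightarrow>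
     (\<forall>(U, \<psi>)\<in>A. open U \<and> open (\<psi> ` U) \<and> homeomorphism U (\<psi> ` U) \<psi> (inv_into U \<psi>)) \<and>
     (\<Union> (fst ` A) = UNIV) \<and>
     (\<forall>(U, \<psi>)\<in>A. \<forall>(V, \<eta>)\<in>A. smooth_on (\<psi> ` (U \<inter> V)) (\<eta> \<circ> inv_into U \<psi>))"

definition smooth_map :: "('m::topological_space set \<times> ('m \<Rightarrow> 'n::euclidean_space)) set
    \<Rightarrow> ('m \<Rightarrow> 'e::real_normed_vector) \<Rightarrow> bool" where
  "smooth_map A \<phi> \<longleftrightarrow> continuous_on UNIV \<phi> \<and>
     (\<forall>(U, \<psi>)\<in>A. smooth_on (\<psi> ` U) (\<phi> \<circ> inv_into U \<psi>))"

definition smooth_curve :: "('m::topological_space set \<times> ('m \<Rightarrow> 'n::euclidean_space)) set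
    \<Rightarrow> (real \<Rightarrow> 'm) \<Rightarrow> bool" where
  "smooth_curve A c \<longleftrightarrow> continuous_on UNIV c \<and>
     (\<forall>(U, \<psi>)\<in>A. smooth_on (c -` U) (\<psi> \<circ> c))"

definition two_critical :: "('m::topological_space set \<times> ('m \<Rightarrow> 'n::euclidean_space)) set
    \<Rightarrow> ('m \<Rightarrow> real) \<Rightarrow> 'm \<Rightarrow> bool" where
  "two_critical A g y \<longleftrightarrow>
     (\<forall>c. smooth_curve A c \<and> c 0 = y \<longrightarrow>
        deriv (g \<circ> c) 0 = 0 \<and> deriv (deriv (g \<circ> c)) 0 \<ge> 0)"

definition twice_differentiable :: "('e::euclidean_space \<Rightarrow> real) \<Rightarrow> bool" where
  "twice_differentiable f \<longleftrightarrow>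
     (\<exists>G. (\<forall>x. (f has_derivative (\<lambda>h. G x \<bullet> h)) (at x)) \<and> (\<forall>x. G differentiable (at x)))"

definition W_set :: "('m::topological_space set \<times> ('m \<Rightarrow> 'n::euclidean_space)) set
    \<Rightarrow> ('m \<Rightarrow> 'e::euclidean_space) \<Rightarrow> 'm \<Rightarrow> 'e set" where
  "W_set A \<phi> y = {w. \<exists>f. twice_differentiable f \<and>
       (f has_derivative (\<lambda>h. w \<bullet> h)) (at (\<phi> y)) \<and> two_critical A (f \<circ> \<phi>) y}"

end

theory Submission
  imports Defs
begin


lemma chain2:
  fixes f :: "'e::euclidean_space \<Rightarrow> real" and \<gamma> \<gamma>' :: "real \<Rightarrow> 'e"
  assumes e: "e > 0"
    and g1: "\<And>t. t \<in> ball 0 e \<Longrightarrow> (\<gamma> has_vector_derivative \<gamma>' t) (at t)"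
    and g2: "(\<gamma>' has_vector_derivative a) (at 0)"
    and fG: "\<And>x. (f has_derivative (\<lambda>h. G x \<bullet> h)) (at x)"
    and GD: "(G has_derivative DG) (at (\<gamma> 0))"
  shows "deriv (f \<circ> \<gamma>) 0 = G (\<gamma> 0) \<bullet> \<gamma>' 0 \<and>
         deriv (deriv (f \<circ> \<gamma>)) 0 = DG (\<gamma>' 0) \<bullet> \<gamma>' 0 + G (\<gamma> 0) \<bullet> a"
proof -
  have d1: "((f \<circ> \<gamma>) has_field_derivative (G (\<gamma> t) \<bullet> \<gamma>' t)) (at t)" if "t \<in> ball 0 e" for t
  proof -
    have "((f \<circ> \<gamma>) has_derivative ((\<lambda>h. G (\<gamma> t) \<bullet> h) \<circ> (\<lambda>h. h *\<^sub>R \<gamma>' t))) (at t)"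
      using diff_chain_at[OF g1[OF that, unfolded has_vector_derivative_def] fG] .
    moreover have "((\<lambda>h. G (\<gamma> t) \<bullet> h) \<circ> (\<lambda>h. h *\<^sub>R \<gamma>' t)) = (*) (G (\<gamma> t) \<bullet> \<gamma>' t)"
      by (auto simp: fun_eq_iff)
    ultimately show ?thesis by (simp add: has_field_derivative_def)
  qed
  have ev: "eventually (\<lambda>t. deriv (f \<circ> \<gamma>) t = G (\<gamma> t) \<bullet> \<gamma>' t) (nhds 0)"
    using e by (intro eventually_nhds_in_open[of "ball 0 e", THEN eventually_mono])
       (auto intro!: DERIV_imp_deriv d1)
  have lin: "linear DG" using GD has_derivative_linear by blast
  have gc: "(\<gamma> has_derivative (\<lambda>h. h *\<^sub>R \<gamma>' 0)) (at 0)"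
    using g1[of 0] e by (simp add: has_vector_derivative_def)
  have "((\<lambda>t. G (\<gamma> t) \<bullet> \<gamma>' t) has_derivative
        (\<lambda>h. G (\<gamma> 0) \<bullet> (h *\<^sub>R a) + (DG \<circ> (\<lambda>h. h *\<^sub>R \<gamma>' 0)) h \<bullet> \<gamma>' 0)) (at 0)"
    using has_derivative_inner[OF diff_chain_at[OF gc GD] g2[unfolded has_vector_derivative_def]]
    by simp
  moreover have "(\<lambda>h. G (\<gamma> 0) \<bullet> (h *\<^sub>R a) + (DG \<circ> (\<lambda>h. h *\<^sub>R \<gamma>' 0)) h \<bullet> \<gamma>' 0)
      = (*) (DG (\<gamma>' 0) \<bullet> \<gamma>' 0 + G (\<gamma> 0) \<bullet> a)"
    using lin by (auto simp: fun_eq_iff linear_scale algebra_simps)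
  ultimately have "((\<lambda>t. G (\<gamma> t) \<bullet> \<gamma>' t) has_field_derivative (DG (\<gamma>' 0) \<bullet> \<gamma>' 0 + G (\<gamma> 0) \<bullet> a)) (at 0)"
    by (simp add: has_field_derivative_def)
  then have "deriv (\<lambda>t. G (\<gamma> t) \<bullet> \<gamma>' t) 0 = DG (\<gamma>' 0) \<bullet> \<gamma>' 0 + G (\<gamma> 0) \<bullet> a"
    by (rule DERIV_imp_deriv)
  moreover have "deriv (deriv (f \<circ> \<gamma>)) 0 = deriv (\<lambda>t. G (\<gamma> t) \<bullet> \<gamma>' t) 0"
    by (rule deriv_cong_ev[OF ev refl])
  ultimately show ?thesis using d1[of 0] e by (auto intro: DERIV_imp_deriv)
qed



lemma curve_data:
  fixes A :: "('m::topological_space set \<times> ('m \<Rightarrow> 'n::euclidean_space)) set"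
    and \<phi> :: "'m \<Rightarrow> 'e::euclidean_space"
  assumes atl: "smooth_atlas A" and sm: "smooth_map A \<phi>" and sc: "smooth_curve A c"
  shows "\<exists>e>0. \<exists>\<gamma>' a. (\<forall>t\<in>ball 0 e. ((\<phi> \<circ> c) has_vector_derivative \<gamma>' t) (at t))
                 \<and> (\<gamma>' has_vector_derivative a) (at 0)"
proof -
  have cov: "\<Union> (fst ` A) = UNIV"
   and ch: "\<forall>(U, \<psi>)\<in>A. open U \<and> open (\<psi> ` U) \<and> homeomorphism U (\<psi> ` U) \<psi> (inv_into U \<psi>)"
    using atl unfolding smooth_atlas_def by blast+
  have "c 0 \<in> \<Union> (fst ` A)" by (simp only: cov UNIV_I)
  then obtain p where pA: "p \<in> A" and cp: "c 0 \<in> fst p" by blast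
  define U where "U = fst p"
  define \<psi> where "\<psi> = snd p"
  have UA: "(U, \<psi>) \<in> A" using pA by (simp add: U_def \<psi>_def)
  have cU: "c 0 \<in> U" using cp by (simp add: U_def)
  have "open U \<and> open (\<psi> ` U) \<and> homeomorphism U (\<psi> ` U) \<psi> (inv_into U \<psi>)"
    using bspec[OF ch UA] by simp
  then have oU: "open U" and hom: "homeomorphism U (\<psi> ` U) \<psi> (inv_into U \<psi>)" by blast+
  have inv: "\<And>x. x \<in> U \<Longrightarrow> inv_into U \<psi> (\<psi> x) = x"
    using hom unfolding homeomorphism_def by blast
  define S where "S = c -` U"
  have cc: "continuous_on UNIV c" and scA: "\<forall>(U, \<psi>)\<in>A. smooth_on (c -` U) (\<psi> \<circ> c)"
    using sc unfolding smooth_curve_def by blast+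
  have oS: "open S"
    using continuous_on_open_vimage[of UNIV c] cc oU unfolding S_def by simp
  have S0: "0 \<in> S" using cU unfolding S_def by simp
  define \<beta> where "\<beta> = \<psi> \<circ> c"
  define h where "h = \<phi> \<circ> inv_into U \<psi>"
  have "smooth_on S \<beta>" using bspec[OF scA UA] unfolding S_def \<beta>_def by simp
  then have \<beta>2: "C_k_on 2 S \<beta>" unfolding smooth_on_def by blast
  have smA: "\<forall>(U, \<psi>)\<in>A. smooth_on (\<psi> ` U) (\<phi> \<circ> inv_into U \<psi>)"
    using sm unfolding smooth_map_def by blast
  have "smooth_on (\<psi> ` U) h" using bspec[OF smA UA] unfolding h_def by simp
  then have h2: "C_k_on 2 (\<psi> ` U) h" unfolding smooth_on_def by blast
  have \<beta>d: "\<And>t. t \<in> S \<Longrightarrow> \<beta> differentiable (at t)"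
   and \<beta>dd: "\<And>v t. t \<in> S \<Longrightarrow> (\<lambda>t. frechet_derivative \<beta> (at t) v) differentiable (at t)"
    using \<beta>2 unfolding numeral_2_eq_2 C_k_on.simps by blast+
  have hd: "\<And>z. z \<in> \<psi> ` U \<Longrightarrow> h differentiable (at z)"
   and hdd: "\<And>v z. z \<in> \<psi> ` U \<Longrightarrow> (\<lambda>z. frechet_derivative h (at z) v) differentiable (at z)"
    using h2 unfolding numeral_2_eq_2 C_k_on.simps by blast+
  have \<beta>U: "\<And>t. t \<in> S \<Longrightarrow> \<beta> t \<in> \<psi> ` U" unfolding S_def \<beta>_def by simp
  have eq: "\<And>t. t \<in> S \<Longrightarrow> (h \<circ> \<beta>) t = (\<phi> \<circ> c) t"
    using inv S_def by (auto simp: h_def \<beta>_def)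
  obtain e where e: "e > 0" "ball 0 e \<subseteq> S" using oS S0 open_contains_ball by blast
  define \<gamma>' where "\<gamma>' t = (\<Sum>i\<in>Basis. (frechet_derivative \<beta> (at t) 1 \<bullet> i) *\<^sub>R frechet_derivative h (at (\<beta> t)) i)" for t
  have vd: "((\<phi> \<circ> c) has_vector_derivative \<gamma>' t) (at t)" if tS: "t \<in> S" for t
  proof -
    have Db: "(\<beta> has_derivative frechet_derivative \<beta> (at t)) (at t)"
      using \<beta>d[OF tS] frechet_derivative_works by blast
    have Dh: "(h has_derivative frechet_derivative h (at (\<beta> t))) (at (\<beta> t))"
      using hd[OF \<beta>U[OF tS]] frechet_derivative_works by blast
    have lb: "linear (frechet_derivative \<beta> (at t))" using Db has_derivative_linear by blast
    have lh: "linear (frechet_derivative h (at (\<beta> t)))" using Dh has_derivative_linear by blast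
    have "((h \<circ> \<beta>) has_derivative (frechet_derivative h (at (\<beta> t)) \<circ> frechet_derivative \<beta> (at t))) (at t)"
      using diff_chain_at[OF Db Dh] .
    then have "((\<phi> \<circ> c) has_derivative (frechet_derivative h (at (\<beta> t)) \<circ> frechet_derivative \<beta> (at t))) (at t)"
      by (rule has_derivative_transform_within_open[OF _ oS tS eq])
    moreover have "(frechet_derivative h (at (\<beta> t)) \<circ> frechet_derivative \<beta> (at t)) = (\<lambda>r. r *\<^sub>R \<gamma>' t)"
    proof
      fix r :: real
      have "frechet_derivative \<beta> (at t) r = r *\<^sub>R frechet_derivative \<beta> (at t) 1"
        using linear_scale[OF lb, of r 1] by simp
      also have "\<dots> = r *\<^sub>R (\<Sum>i\<in>Basis. (frechet_derivative \<beta> (at t) 1 \<bullet> i) *\<^sub>R i)"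
        by (simp add: euclidean_representation)
      finally show "(frechet_derivative h (at (\<beta> t)) \<circ> frechet_derivative \<beta> (at t)) r = r *\<^sub>R \<gamma>' t"
        by (simp add: \<gamma>'_def linear_scale[OF lh] linear_sum[OF lh] scaleR_sum_right)
    qed
    ultimately show ?thesis by (simp add: has_vector_derivative_def)
  qed
  have "\<gamma>' differentiable (at 0)"
    unfolding \<gamma>'_def
  proof (intro differentiable_sum ballI finite_Basis differentiable_scaleR differentiable_inner differentiable_const)
    show "(\<lambda>t. frechet_derivative \<beta> (at t) 1) differentiable at 0" using \<beta>dd[OF S0] .
    fix i :: 'n
    show "(\<lambda>t. frechet_derivative h (at (\<beta> t)) i) differentiable at 0"
      using differentiable_compose[OF hdd[OF \<beta>U[OF S0]] \<beta>d[OF S0]] by simp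
  qed
  then have "(\<gamma>' has_vector_derivative vector_derivative \<gamma>' (at 0)) (at 0)"
    using vector_derivative_works by blast
  then show ?thesis using e vd by blast
qed


lemma qd: "((\<lambda>x'. x' \<bullet> w + \<alpha> / 2 * (norm (x' - x0))\<^sup>2) has_derivative (\<lambda>h. (w + \<alpha> *\<^sub>R (z - x0)) \<bullet> h)) (at z)"
  for w x0 z :: "'e::euclidean_space"
proof -
  have "((\<lambda>x'. x' \<bullet> w + \<alpha> / 2 * ((x' - x0) \<bullet> (x' - x0))) has_derivative (\<lambda>h. (w + \<alpha> *\<^sub>R (z - x0)) \<bullet> h)) (at z)"
    by (rule derivative_eq_intros refl | simp)+ (simp add: algebra_simps inner_commute fun_eq_iff field_simps)
  then show ?thesis by (simp add: power2_norm_eq_inner)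
qed
lemma qG: "((\<lambda>z. w + \<alpha> *\<^sub>R (z - x0)) has_derivative (\<lambda>h. \<alpha> *\<^sub>R h)) (at z)"
  for w x0 z :: "'e::euclidean_space"
  by (rule derivative_eq_intros refl | simp)+

lemma curve_both:
  fixes A :: "('m::topological_space set \<times> ('m \<Rightarrow> 'n::euclidean_space)) set"
    and \<phi> :: "'m \<Rightarrow> 'e::euclidean_space"
  assumes atl: "smooth_atlas A" and sm: "smooth_map A \<phi>" and sc: "smooth_curve A c"
  shows "\<exists>v a. \<forall>(f::'e \<Rightarrow> real) G DG. (\<forall>x. (f has_derivative (\<lambda>h. G x \<bullet> h)) (at x))
     \<longrightarrow> (G has_derivative DG) (at (\<phi> (c 0))) \<longrightarrow>
     deriv ((f \<circ> \<phi>) \<circ> c) 0 = G (\<phi> (c 0)) \<bullet> v \<and>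
     deriv (deriv ((f \<circ> \<phi>) \<circ> c)) 0 = DG v \<bullet> v + G (\<phi> (c 0)) \<bullet> a"
proof -
  obtain e \<gamma>' a where e: "e > 0" and g1: "\<forall>t\<in>ball 0 e. ((\<phi> \<circ> c) has_vector_derivative \<gamma>' t) (at t)"
    and g2: "(\<gamma>' has_vector_derivative a) (at 0)"
    using curve_data[OF atl sm sc] by blast
  show ?thesis
  proof (intro exI allI impI)
    fix f :: "'e \<Rightarrow> real" and G DG
    assume fG: "\<forall>x. (f has_derivative (\<lambda>h. G x \<bullet> h)) (at x)" and GD: "(G has_derivative DG) (at (\<phi> (c 0)))"
    have GD': "(G has_derivative DG) (at ((\<phi> \<circ> c) 0))" using GD by simp
    have "deriv (f \<circ> (\<phi> \<circ> c)) 0 = G ((\<phi> \<circ> c) 0) \<bullet> \<gamma>' 0 \<and>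
         deriv (deriv (f \<circ> (\<phi> \<circ> c))) 0 = DG (\<gamma>' 0) \<bullet> \<gamma>' 0 + G ((\<phi> \<circ> c) 0) \<bullet> a"
      by (rule chain2[of e "\<phi> \<circ> c" \<gamma>' a f G DG, OF e _ g2 _ GD']) (use g1 fG in blast)+
    then show "deriv ((f \<circ> \<phi>) \<circ> c) 0 = G (\<phi> (c 0)) \<bullet> \<gamma>' 0 \<and>
     deriv (deriv ((f \<circ> \<phi>) \<circ> c)) 0 = DG (\<gamma>' 0) \<bullet> \<gamma>' 0 + G (\<phi> (c 0)) \<bullet> a"
      by (simp add: o_assoc)
  qed
qed

lemma curve_quad:
  fixes A :: "('m::topological_space set \<times> ('m \<Rightarrow> 'n::euclidean_space)) set"
    and \<phi> :: "'m \<Rightarrow> 'e::euclidean_space"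
  assumes atl: "smooth_atlas A" and sm: "smooth_map A \<phi>" and sc: "smooth_curve A c" and c0: "c 0 = y"
  shows "\<exists>v a. \<forall>\<alpha> w. deriv (((\<lambda>x'. x' \<bullet> w + \<alpha> / 2 * (norm (x' - \<phi> y))\<^sup>2) \<circ> \<phi>) \<circ> c) 0 = w \<bullet> v \<and>
     deriv (deriv (((\<lambda>x'. x' \<bullet> w + \<alpha> / 2 * (norm (x' - \<phi> y))\<^sup>2) \<circ> \<phi>) \<circ> c)) 0 = \<alpha> * (v \<bullet> v) + w \<bullet> a"
proof -
  obtain v a where H: "\<And>(f::'e \<Rightarrow> real) G DG. (\<forall>x. (f has_derivative (\<lambda>h. G x \<bullet> h)) (at x))
     \<Longrightarrow> (G has_derivative DG) (at (\<phi> (c 0))) \<Longrightarrow>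
     deriv ((f \<circ> \<phi>) \<circ> c) 0 = G (\<phi> (c 0)) \<bullet> v \<and>
     deriv (deriv ((f \<circ> \<phi>) \<circ> c)) 0 = DG v \<bullet> v + G (\<phi> (c 0)) \<bullet> a"
    using curve_both[OF atl sm sc] by blast
  show ?thesis
  proof (intro exI allI)
    fix \<alpha> :: real and w :: 'e
    have "deriv (((\<lambda>x'. x' \<bullet> w + \<alpha> / 2 * (norm (x' - \<phi> y))\<^sup>2) \<circ> \<phi>) \<circ> c) 0 = (w + \<alpha> *\<^sub>R (\<phi> (c 0) - \<phi> y)) \<bullet> v \<and>
     deriv (deriv (((\<lambda>x'. x' \<bullet> w + \<alpha> / 2 * (norm (x' - \<phi> y))\<^sup>2) \<circ> \<phi>) \<circ> c)) 0 = (\<alpha> *\<^sub>R v) \<bullet> v + (w + \<alpha> *\<^sub>R (\<phi> (c 0) - \<phi> y)) \<bullet> a"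
      by (rule H[where G="\<lambda>z. w + \<alpha> *\<^sub>R (z - \<phi> y)" and DG="\<lambda>h. \<alpha> *\<^sub>R h"]) (rule allI qd qG)+
    then show "deriv (((\<lambda>x'. x' \<bullet> w + \<alpha> / 2 * (norm (x' - \<phi> y))\<^sup>2) \<circ> \<phi>) \<circ> c) 0 = w \<bullet> v \<and>
     deriv (deriv (((\<lambda>x'. x' \<bullet> w + \<alpha> / 2 * (norm (x' - \<phi> y))\<^sup>2) \<circ> \<phi>) \<circ> c)) 0 = \<alpha> * (v \<bullet> v) + w \<bullet> a"
      using c0 by simp
  qed
qed

theorem proposition3p17:
  fixes A :: "('m::{t2_space, second_countable_topology} set \<times> ('m \<Rightarrow> 'n::euclidean_space)) set"
    and \<phi> :: "'m \<Rightarrow> 'e::euclidean_space"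
    and y :: 'm
  assumes "smooth_atlas A"
    and "smooth_map A \<phi>"
  shows "W_set A \<phi> y =
           {w. \<exists>\<alpha>>0. two_critical A
                 ((\<lambda>x'. x' \<bullet> w + \<alpha> / 2 * (norm (x' - \<phi> y))\<^sup>2) \<circ> \<phi>) y}
       \<and> convex_cone (W_set A \<phi> y)"
proof -
  note atl = assms(1) and sm = assms(2)
  define Q where "Q = {w. \<exists>\<alpha>>0. two_critical A
                 ((\<lambda>x'. x' \<bullet> w + \<alpha> / 2 * (norm (x' - \<phi> y))\<^sup>2) \<circ> \<phi>) y}"
  have WQ: "W_set A \<phi> y \<subseteq> Q"
  proof
    fix w assume "w \<in> W_set A \<phi> y"
    then obtain f where td: "twice_differentiable f" and fw: "(f has_derivative (\<lambda>h. w \<bullet> h)) (at (\<phi> y))"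
      and tc: "two_critical A (f \<circ> \<phi>) y" unfolding W_set_def by blast
    obtain G where fG: "\<forall>x. (f has_derivative (\<lambda>h. G x \<bullet> h)) (at x)" and Gd: "\<forall>x. G differentiable (at x)"
      using td unfolding twice_differentiable_def by blast
    have "(\<lambda>h. G (\<phi> y) \<bullet> h) = (\<lambda>h. w \<bullet> h)" using has_derivative_unique fG fw by blast
    then have "G (\<phi> y) \<bullet> (G (\<phi> y) - w) = w \<bullet> (G (\<phi> y) - w)" by (rule fun_cong)
    then have "(G (\<phi> y) - w) \<bullet> (G (\<phi> y) - w) = 0" by (simp only: inner_diff_left diff_self)
    then have Gw: "G (\<phi> y) = w" by simp
    define DG where "DG = frechet_derivative G (at (\<phi> y))"
    have GD: "(G has_derivative DG) (at (\<phi> y))" using Gd frechet_derivative_works DG_def by blast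
    then have "bounded_linear DG" by (rule has_derivative_bounded_linear)
    then obtain K where K: "K > 0" "\<And>h. norm (DG h) \<le> norm h * K" using bounded_linear.pos_bounded by blast
    have DK: "DG v \<bullet> v \<le> K * (v \<bullet> v)" for v
    proof -
      have "DG v \<bullet> v \<le> norm (DG v) * norm v" by (rule order_trans[OF abs_ge_self Cauchy_Schwarz_ineq2])
      also have "\<dots> \<le> norm v * K * norm v" by (rule mult_right_mono[OF K(2)]) simp
      finally show ?thesis by (simp add: power2_norm_eq_inner[symmetric] power2_eq_square algebra_simps)
    qed
    have "two_critical A ((\<lambda>x'. x' \<bullet> w + K / 2 * (norm (x' - \<phi> y))\<^sup>2) \<circ> \<phi>) y"
      unfolding two_critical_def
    proof (intro allI impI)
      fix c assume c: "smooth_curve A c \<and> c 0 = y"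
      obtain v a where H: "\<And>(f::'e \<Rightarrow> real) G DG. (\<forall>x. (f has_derivative (\<lambda>h. G x \<bullet> h)) (at x))
         \<Longrightarrow> (G has_derivative DG) (at (\<phi> (c 0))) \<Longrightarrow>
         deriv ((f \<circ> \<phi>) \<circ> c) 0 = G (\<phi> (c 0)) \<bullet> v \<and>
         deriv (deriv ((f \<circ> \<phi>) \<circ> c)) 0 = DG v \<bullet> v + G (\<phi> (c 0)) \<bullet> a"
        using curve_both[OF atl sm, of c] c by blast
      have f1: "deriv ((f \<circ> \<phi>) \<circ> c) 0 = w \<bullet> v \<and> deriv (deriv ((f \<circ> \<phi>) \<circ> c)) 0 = DG v \<bullet> v + w \<bullet> a"
        using H[OF fG] GD c Gw by auto
      have f2: "deriv (((\<lambda>x'. x' \<bullet> w + K / 2 * (norm (x' - \<phi> y))\<^sup>2) \<circ> \<phi>) \<circ> c) 0 = (w + K *\<^sub>R (\<phi> (c 0) - \<phi> y)) \<bullet> v \<and>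
       deriv (deriv (((\<lambda>x'. x' \<bullet> w + K / 2 * (norm (x' - \<phi> y))\<^sup>2) \<circ> \<phi>) \<circ> c)) 0 = (K *\<^sub>R v) \<bullet> v + (w + K *\<^sub>R (\<phi> (c 0) - \<phi> y)) \<bullet> a"
        by (rule H[where G="\<lambda>z. w + K *\<^sub>R (z - \<phi> y)" and DG="\<lambda>h. K *\<^sub>R h"]) (rule allI qd qG)+
      have "deriv ((f \<circ> \<phi>) \<circ> c) 0 = 0 \<and> deriv (deriv ((f \<circ> \<phi>) \<circ> c)) 0 \<ge> 0"
        using tc c unfolding two_critical_def by blast
      then show "deriv (((\<lambda>x'. x' \<bullet> w + K / 2 * (norm (x' - \<phi> y))\<^sup>2) \<circ> \<phi>) \<circ> c) 0 = 0 \<and>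
        deriv (deriv (((\<lambda>x'. x' \<bullet> w + K / 2 * (norm (x' - \<phi> y))\<^sup>2) \<circ> \<phi>) \<circ> c)) 0 \<ge> 0"
        using f1 f2 c DK[of v] by simp
    qed
    then show "w \<in> Q" unfolding Q_def using K by blast
  qed
  have QW: "Q \<subseteq> W_set A \<phi> y"
  proof
    fix w assume "w \<in> Q"
    then obtain \<alpha> where tc: "two_critical A ((\<lambda>x'. x' \<bullet> w + \<alpha> / 2 * (norm (x' - \<phi> y))\<^sup>2) \<circ> \<phi>) y"
      unfolding Q_def by blast
    have "twice_differentiable (\<lambda>x'. x' \<bullet> w + \<alpha> / 2 * (norm (x' - \<phi> y))\<^sup>2)"
      unfolding twice_differentiable_def differentiable_def
      by (rule exI[of _ "\<lambda>z. w + \<alpha> *\<^sub>R (z - \<phi> y)"]) (blast intro: qd qG)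
    moreover have "((\<lambda>x'. x' \<bullet> w + \<alpha> / 2 * (norm (x' - \<phi> y))\<^sup>2) has_derivative (\<lambda>h. w \<bullet> h)) (at (\<phi> y))"
      using qd[of w \<alpha> "\<phi> y" "\<phi> y"] by simp
    ultimately show "w \<in> W_set A \<phi> y" unfolding W_set_def using tc by blast
  qed
  have eqQ: "W_set A \<phi> y = Q" using WQ QW by blast
  define D where "D c v a \<longleftrightarrow> (\<forall>\<alpha> w. deriv (((\<lambda>x'. x' \<bullet> w + \<alpha> / 2 * (norm (x' - \<phi> y))\<^sup>2) \<circ> \<phi>) \<circ> c) 0 = w \<bullet> v \<and>
     deriv (deriv (((\<lambda>x'. x' \<bullet> w + \<alpha> / 2 * (norm (x' - \<phi> y))\<^sup>2) \<circ> \<phi>) \<circ> c)) 0 = \<alpha> * (v \<bullet> v) + w \<bullet> a)" for c v a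
  have critc: "(deriv (((\<lambda>x'. x' \<bullet> w + \<alpha> / 2 * (norm (x' - \<phi> y))\<^sup>2) \<circ> \<phi>) \<circ> c) 0 = 0 \<and>
     deriv (deriv (((\<lambda>x'. x' \<bullet> w + \<alpha> / 2 * (norm (x' - \<phi> y))\<^sup>2) \<circ> \<phi>) \<circ> c)) 0 \<ge> 0)
     \<longleftrightarrow> (\<forall>v a. D c v a \<longrightarrow> w \<bullet> v = 0 \<and> \<alpha> * (v \<bullet> v) + w \<bullet> a \<ge> 0)"
    if c: "smooth_curve A c \<and> c 0 = y" for c \<alpha> w
  proof
    assume L: "deriv (((\<lambda>x'. x' \<bullet> w + \<alpha> / 2 * (norm (x' - \<phi> y))\<^sup>2) \<circ> \<phi>) \<circ> c) 0 = 0 \<and>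
     deriv (deriv (((\<lambda>x'. x' \<bullet> w + \<alpha> / 2 * (norm (x' - \<phi> y))\<^sup>2) \<circ> \<phi>) \<circ> c)) 0 \<ge> 0"
    show "\<forall>v a. D c v a \<longrightarrow> w \<bullet> v = 0 \<and> \<alpha> * (v \<bullet> v) + w \<bullet> a \<ge> 0"
    proof (intro allI impI)
      fix v a assume "D c v a"
      then have "deriv (((\<lambda>x'. x' \<bullet> w + \<alpha> / 2 * (norm (x' - \<phi> y))\<^sup>2) \<circ> \<phi>) \<circ> c) 0 = w \<bullet> v \<and>
     deriv (deriv (((\<lambda>x'. x' \<bullet> w + \<alpha> / 2 * (norm (x' - \<phi> y))\<^sup>2) \<circ> \<phi>) \<circ> c)) 0 = \<alpha> * (v \<bullet> v) + w \<bullet> a"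
        unfolding D_def by blast
      then show "w \<bullet> v = 0 \<and> \<alpha> * (v \<bullet> v) + w \<bullet> a \<ge> 0" using L by simp
    qed
  next
    assume R: "\<forall>v a. D c v a \<longrightarrow> w \<bullet> v = 0 \<and> \<alpha> * (v \<bullet> v) + w \<bullet> a \<ge> 0"
    obtain v a where "D c v a" using curve_quad[OF atl sm, of c y] c unfolding D_def by blast
    then have "deriv (((\<lambda>x'. x' \<bullet> w + \<alpha> / 2 * (norm (x' - \<phi> y))\<^sup>2) \<circ> \<phi>) \<circ> c) 0 = w \<bullet> v \<and>
     deriv (deriv (((\<lambda>x'. x' \<bullet> w + \<alpha> / 2 * (norm (x' - \<phi> y))\<^sup>2) \<circ> \<phi>) \<circ> c)) 0 = \<alpha> * (v \<bullet> v) + w \<bullet> a"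
        and "w \<bullet> v = 0 \<and> \<alpha> * (v \<bullet> v) + w \<bullet> a \<ge> 0" using R unfolding D_def by blast+
    then show "deriv (((\<lambda>x'. x' \<bullet> w + \<alpha> / 2 * (norm (x' - \<phi> y))\<^sup>2) \<circ> \<phi>) \<circ> c) 0 = 0 \<and>
     deriv (deriv (((\<lambda>x'. x' \<bullet> w + \<alpha> / 2 * (norm (x' - \<phi> y))\<^sup>2) \<circ> \<phi>) \<circ> c)) 0 \<ge> 0" by simp
  qed
  have crit: "w \<in> Q \<longleftrightarrow> (\<exists>\<alpha>>0. \<forall>c. smooth_curve A c \<and> c 0 = y \<longrightarrow>
     (\<forall>v a. D c v a \<longrightarrow> w \<bullet> v = 0 \<and> \<alpha> * (v \<bullet> v) + w \<bullet> a \<ge> 0))" for w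
    unfolding Q_def two_critical_def mem_Collect_eq
    apply (intro ex_cong1 conj_cong refl all_cong1 imp_cong)
    apply (erule critc)
    done
  have cc: "convex_cone Q"
    unfolding convex_cone_iff
  proof (intro conjI ballI allI impI)
    have "\<forall>c. smooth_curve A c \<and> c 0 = y \<longrightarrow>
     (\<forall>v a. D c v a \<longrightarrow> (0::'e) \<bullet> v = 0 \<and> 1 * (v \<bullet> v) + (0::'e) \<bullet> a \<ge> 0)"
      by simp
    then show "0 \<in> Q" by (intro crit[THEN iffD2] exI[of _ "1::real"] conjI zero_less_one)
  next
    fix x z assume xQ: "x \<in> Q" and zQ: "z \<in> Q"
    from crit[THEN iffD1, OF xQ] obtain a1 where a1h: "a1 > 0 \<and> (\<forall>c. smooth_curve A c \<and> c 0 = y \<longrightarrow>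
     (\<forall>v a. D c v a \<longrightarrow> x \<bullet> v = 0 \<and> a1 * (v \<bullet> v) + x \<bullet> a \<ge> 0))" ..
    from crit[THEN iffD1, OF zQ] obtain a2 where a2h: "a2 > 0 \<and> (\<forall>c. smooth_curve A c \<and> c 0 = y \<longrightarrow>
     (\<forall>v a. D c v a \<longrightarrow> z \<bullet> v = 0 \<and> a2 * (v \<bullet> v) + z \<bullet> a \<ge> 0))" ..
    note a1 = conjunct1[OF a1h] and h1 = conjunct2[OF a1h]
    note a2 = conjunct1[OF a2h] and h2 = conjunct2[OF a2h]
    show "x + z \<in> Q"
    proof (rule crit[THEN iffD2], intro exI[of _ "a1 + a2"] conjI allI impI)
      show "a1 + a2 > 0" using a1 a2 by simp
      fix c v a assume "smooth_curve A c \<and> c 0 = y" "D c v a"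
      then have "x \<bullet> v = 0 \<and> a1 * (v \<bullet> v) + x \<bullet> a \<ge> 0" "z \<bullet> v = 0 \<and> a2 * (v \<bullet> v) + z \<bullet> a \<ge> 0"
        using h1 h2 by blast+
      then have G: "(x + z) \<bullet> v = 0 \<and> (a1 + a2) * (v \<bullet> v) + (x + z) \<bullet> a \<ge> 0"
        by (simp add: inner_add_left distrib_right)
      then show "(x + z) \<bullet> v = 0" by (rule conjunct1)
      show "(a1 + a2) * (v \<bullet> v) + (x + z) \<bullet> a \<ge> 0" by (rule conjunct2[OF G])
    qed
  next
    fix x and t :: real assume xQ: "x \<in> Q" and t0: "t \<ge> 0"
    from crit[THEN iffD1, OF xQ] obtain a1 where a1h: "a1 > 0 \<and> (\<forall>c. smooth_curve A c \<and> c 0 = y \<longrightarrow>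
     (\<forall>v a. D c v a \<longrightarrow> x \<bullet> v = 0 \<and> a1 * (v \<bullet> v) + x \<bullet> a \<ge> 0))" ..
    note a1 = conjunct1[OF a1h] and h1 = conjunct2[OF a1h]
    show "t *\<^sub>R x \<in> Q"
    proof (cases "t = 0")
      case True
      have "\<forall>c. smooth_curve A c \<and> c 0 = y \<longrightarrow>
        (\<forall>v a. D c v a \<longrightarrow> (t *\<^sub>R x) \<bullet> v = 0 \<and> 1 * (v \<bullet> v) + (t *\<^sub>R x) \<bullet> a \<ge> 0)"
        using True by simp
      then show ?thesis by (intro crit[THEN iffD2] exI[of _ "1::real"] conjI zero_less_one)
    next
      case False
      then have tp: "t > 0" using t0 by simp
      show ?thesis
      proof (rule crit[THEN iffD2], intro exI[of _ "t * a1"] conjI allI impI)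
        show "t * a1 > 0" using tp a1 by simp
        fix c v a assume c: "smooth_curve A c \<and> c 0 = y" and H: "D c v a"
        have "x \<bullet> v = 0 \<and> a1 * (v \<bullet> v) + x \<bullet> a \<ge> 0" using h1 c H by blast
        then have "t * (x \<bullet> v) = 0 \<and> t * (a1 * (v \<bullet> v) + x \<bullet> a) \<ge> 0" using tp by simp
        then have G: "t *\<^sub>R x \<bullet> v = 0 \<and> t * a1 * (v \<bullet> v) + t *\<^sub>R x \<bullet> a \<ge> 0"
          by (simp add: algebra_simps)
        then show "t *\<^sub>R x \<bullet> v = 0" by (rule conjunct1)
        show "t * a1 * (v \<bullet> v) + t *\<^sub>R x \<bullet> a \<ge> 0" by (rule conjunct2[OF G])
      qed
    qed
  qed
  show ?thesis using eqQ cc Q_def by simp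
qed

end
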